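(* An $L$-topological space $X$ is a strictly injective $T_0$ $L$-topological space if and only if $X$ is $L$-sober.
   Context: $L$ is a frame. An $L$-topology on $X$ is $\mathcal O(X)\subseteq L^X$ closed under finite meets and arbitrary joins containing all constant maps $a_X$; $f$ continuous if $f^\leftarrow(B)=B\circ f$ is open for all open $B$. $T_0$: $A(x)=A(y)$ for all open $A$ implies $x=y$. A map $f:Y\to Z$ is a quasihomeomorphism if $f^\leftarrow:\mathcal O(Z)\to\mathcal O(Y)$ is a bijection; a subspace embedding if it is injective and $\mathcal O(Y)=\{B\circ f:B\in\mathcal O(Z)\}$; a strict embedding if it is both. A $T_0$ space $X$ is strictly injective if for every strict embedding $j:Y\to Z$ between $T_0$ $L$-topological spaces and every continuous $f:Y\to X$ there is a continuous $g:Z\to X$ with $g\circ j=f$. A point of $\mathcal O(X)$ is $p:\mathcal O(X)\to L$ preserving binary meets and arbitrary joins with $p(\lambda_X)=\lambda$; $[x](A)=A(x)$; $X$ is $L$-sober if $x\mapsto[x]$ is a bijection from $X$ onto the set of points of $\mathcal O(X)$. *)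

theory Defs
  imports Main
begin

text \<open>L-topological spaces are represented by a carrier set X :: 'a set together with a
set OX of L-valued functions 'a => 'l.  Functions are kept extensional: they are bot
outside the carrier.\<close>

definition frame :: "'l::complete_lattice itself \<Rightarrow> bool" where
  "frame _ \<longleftrightarrow> (\<forall>(a::'l) S. inf a (Sup S) = Sup ((inf a) ` S))"

definition const_on :: "'a set \<Rightarrow> 'l::complete_lattice \<Rightarrow> 'a \<Rightarrow> 'l" where
  "const_on X a = (\<lambda>x. if x \<in> X then a else bot)"

definition is_Ltop :: "'a set \<Rightarrow> ('a \<Rightarrow> 'l::complete_lattice) set \<Rightarrow> bool" where
  "is_Ltop X OX \<longleftrightarrow>
     (\<forall>A\<in>OX. \<forall>x. x \<notin> X \<longrightarrow> A x = bot) \<and>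
     (\<forall>a. const_on X a \<in> OX) \<and>
     (\<forall>A\<in>OX. \<forall>B\<in>OX. inf A B \<in> OX) \<and>
     (\<forall>S. S \<subseteq> OX \<longrightarrow> Sup S \<in> OX)"

definition preimg :: "'b set \<Rightarrow> ('b \<Rightarrow> 'a) \<Rightarrow> ('a \<Rightarrow> 'l::complete_lattice) \<Rightarrow> 'b \<Rightarrow> 'l" where
  "preimg Y f B = (\<lambda>y. if y \<in> Y then B (f y) else bot)"

definition Lcontinuous ::
  "'b set \<Rightarrow> ('b \<Rightarrow> 'l::complete_lattice) set \<Rightarrow> 'a set \<Rightarrow> ('a \<Rightarrow> 'l) set \<Rightarrow> ('b \<Rightarrow> 'a) \<Rightarrow> bool" where
  "Lcontinuous Y OY X OX f \<longleftrightarrow> f ` Y \<subseteq> X \<and> (\<forall>B\<in>OX. preimg Y f B \<in> OY)"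

definition LT0 :: "'a set \<Rightarrow> ('a \<Rightarrow> 'l::complete_lattice) set \<Rightarrow> bool" where
  "LT0 X OX \<longleftrightarrow> (\<forall>x\<in>X. \<forall>y\<in>X. (\<forall>A\<in>OX. A x = A y) \<longrightarrow> x = y)"

definition quasihomeomorphism ::
  "'b set \<Rightarrow> ('b \<Rightarrow> 'l::complete_lattice) set \<Rightarrow> 'c set \<Rightarrow> ('c \<Rightarrow> 'l) set \<Rightarrow> ('b \<Rightarrow> 'c) \<Rightarrow> bool" where
  "quasihomeomorphism Y OY Z OZ j \<longleftrightarrow> j ` Y \<subseteq> Z \<and> bij_betw (preimg Y j) OZ OY"

definition subspace_embedding ::
  "'b set \<Rightarrow> ('b \<Rightarrow> 'l::complete_lattice) set \<Rightarrow> 'c set \<Rightarrow> ('c \<Rightarrow> 'l) set \<Rightarrow> ('b \<Rightarrow> 'c) \<Rightarrow> bool" where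
  "subspace_embedding Y OY Z OZ j \<longleftrightarrow> j ` Y \<subseteq> Z \<and> inj_on j Y \<and> OY = preimg Y j ` OZ"

definition strict_embedding ::
  "'b set \<Rightarrow> ('b \<Rightarrow> 'l::complete_lattice) set \<Rightarrow> 'c set \<Rightarrow> ('c \<Rightarrow> 'l) set \<Rightarrow> ('b \<Rightarrow> 'c) \<Rightarrow> bool" where
  "strict_embedding Y OY Z OZ j \<longleftrightarrow>
     quasihomeomorphism Y OY Z OZ j \<and> subspace_embedding Y OY Z OZ j"

text \<open>Strict injectivity, relative to the types 'b and 'c in which the test spaces Y and Z live.\<close>
definition strictly_injective ::
  "'b itself \<Rightarrow> 'c itself \<Rightarrow> 'a set \<Rightarrow> ('a \<Rightarrow> 'l::complete_lattice) set \<Rightarrow> bool" where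
  "strictly_injective _ _ X OX \<longleftrightarrow> LT0 X OX \<and>
     (\<forall>(Y::'b set) OY (Z::'c set) OZ j f.
        is_Ltop Y OY \<and> LT0 Y OY \<and> is_Ltop Z OZ \<and> LT0 Z OZ \<and>
        strict_embedding Y OY Z OZ j \<and> Lcontinuous Y OY X OX f \<longrightarrow>
        (\<exists>g. Lcontinuous Z OZ X OX g \<and> (\<forall>y\<in>Y. g (j y) = f y)))"

definition is_point :: "('a \<Rightarrow> 'l::complete_lattice) set \<Rightarrow> 'a set \<Rightarrow> (('a \<Rightarrow> 'l) \<Rightarrow> 'l) \<Rightarrow> bool" where
  "is_point OX X p \<longleftrightarrow>
     (\<forall>A\<in>OX. \<forall>B\<in>OX. p (inf A B) = inf (p A) (p B)) \<and>
     (\<forall>S. S \<subseteq> OX \<longrightarrow> p (Sup S) = Sup (p ` S)) \<and>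
     (\<forall>a. p (const_on X a) = a)"

definition points :: "'a set \<Rightarrow> ('a \<Rightarrow> 'l::complete_lattice) set \<Rightarrow> (('a \<Rightarrow> 'l) \<Rightarrow> 'l) set" where
  "points X OX = {p. is_point OX X p \<and> (\<forall>A. A \<notin> OX \<longrightarrow> p A = bot)}"

definition pt_of :: "('a \<Rightarrow> 'l::complete_lattice) set \<Rightarrow> 'a \<Rightarrow> ('a \<Rightarrow> 'l) \<Rightarrow> 'l" where
  "pt_of OX x = (\<lambda>A. if A \<in> OX then A x else bot)"

definition L_sober :: "'a set \<Rightarrow> ('a \<Rightarrow> 'l::complete_lattice) set \<Rightarrow> bool" where
  "L_sober X OX \<longleftrightarrow> bij_betw (pt_of OX) X (points X OX)"

end

theory Submission
  imports Defs
begin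

lemma preimg_inf: "preimg Y j (inf A B) = inf (preimg Y j A) (preimg Y j B)"
  by (auto simp: preimg_def fun_eq_iff)

lemma preimg_Sup: "preimg Y j (Sup S) = Sup (preimg Y j ` S)"
  by (auto simp: preimg_def fun_eq_iff image_image)

lemma preimg_const: "j ` Y \<subseteq> Z \<Longrightarrow> preimg Y j (const_on Z a) = const_on Y a"
  by (auto simp: preimg_def const_on_def fun_eq_iff)

lemma Ltop_ext: "is_Ltop X OX \<Longrightarrow> A \<in> OX \<Longrightarrow> x \<notin> X \<Longrightarrow> A x = bot"
  by (auto simp: is_Ltop_def)

lemma dir1:
  fixes X :: "'a set" and OX :: "('a \<Rightarrow> 'l::complete_lattice) set"
  assumes top: "is_Ltop X OX" and sob: "L_sober X OX"
  shows "strictly_injective TYPE('b) TYPE('c) X OX"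
proof -
  have bij: "bij_betw (pt_of OX) X (points X OX)" using sob by (simp add: L_sober_def)
  have injX: "inj_on (pt_of OX) X" using bij bij_betw_def by blast
  have T0: "LT0 X OX"
    unfolding LT0_def
  proof (intro ballI impI)
    fix x y assume "x \<in> X" "y \<in> X" "\<forall>A\<in>OX. A x = A y"
    then have "pt_of OX x = pt_of OX y" by (auto simp: pt_of_def fun_eq_iff)
    then show "x = y" using injX \<open>x \<in> X\<close> \<open>y \<in> X\<close> by (meson inj_on_def)
  qed
  show ?thesis
    unfolding strictly_injective_def
  proof (intro conjI T0 allI impI)
    fix Y :: "'b set" and OY and Z :: "'c set" and OZ j f
    assume H: "is_Ltop Y OY \<and> LT0 Y OY \<and> is_Ltop Z OZ \<and> LT0 Z OZ \<and>
        strict_embedding Y OY Z OZ j \<and> Lcontinuous Y OY X OX f"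
    then have topY: "is_Ltop Y OY" and topZ: "is_Ltop Z OZ"
      and jZ: "j ` Y \<subseteq> Z" and bphi: "bij_betw (preimg Y j) OZ OY"
      and fX: "f ` Y \<subseteq> X" and fc: "\<And>B. B \<in> OX \<Longrightarrow> preimg Y f B \<in> OY"
      by (auto simp: strict_embedding_def quasihomeomorphism_def Lcontinuous_def)
    define \<phi> :: "('c \<Rightarrow> 'l) \<Rightarrow> 'b \<Rightarrow> 'l" where "\<phi> = preimg Y j"
    define \<psi> where "\<psi> = the_inv_into OZ \<phi>"
    have bphi': "bij_betw \<phi> OZ OY" using bphi \<phi>_def by simp
    have psiZ: "\<And>u. u \<in> OY \<Longrightarrow> \<psi> u \<in> OZ"
      unfolding \<psi>_def by (rule bij_betw_apply[OF bij_betw_the_inv_into[OF bphi']])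
    have phipsi: "\<And>u. u \<in> OY \<Longrightarrow> \<phi> (\<psi> u) = u"
      unfolding \<psi>_def using bphi' by (metis bij_betw_def f_the_inv_into_f)
    have psiphi: "\<And>A. A \<in> OZ \<Longrightarrow> \<psi> (\<phi> A) = A"
      unfolding \<psi>_def using bphi' by (metis bij_betw_def the_inv_into_f_f)
    have psi_inf: "\<psi> (inf u v) = inf (\<psi> u) (\<psi> v)" if "u \<in> OY" "v \<in> OY" for u v
    proof -
      have "inf (\<psi> u) (\<psi> v) \<in> OZ" using topZ psiZ that by (auto simp: is_Ltop_def)
      moreover have "\<phi> (inf (\<psi> u) (\<psi> v)) = inf u v"
        using phipsi that by (simp add: \<phi>_def preimg_inf)
      ultimately show ?thesis using psiphi by metis
    qed
    have psi_Sup: "\<psi> (Sup T) = Sup (\<psi> ` T)" if "T \<subseteq> OY" for T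
    proof -
      have "\<psi> ` T \<subseteq> OZ" using psiZ that by auto
      then have "Sup (\<psi> ` T) \<in> OZ" using topZ by (simp add: is_Ltop_def)
      moreover have "\<phi> (Sup (\<psi> ` T)) = Sup T"
      proof -
        have "\<phi> (Sup (\<psi> ` T)) = Sup (\<phi> ` \<psi> ` T)" by (simp add: \<phi>_def preimg_Sup)
        also have "\<phi> ` \<psi> ` T = T" using phipsi that by (force simp: image_image)
        finally show ?thesis .
      qed
      ultimately show ?thesis using psiphi by metis
    qed
    have psi_const: "\<psi> (const_on Y a) = const_on Z a" for a
    proof -
      have "const_on Z a \<in> OZ" using topZ by (auto simp: is_Ltop_def)
      moreover have "\<phi> (const_on Z a) = const_on Y a" using jZ by (simp add: \<phi>_def preimg_const)
      ultimately show ?thesis using psiphi by metis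
    qed
    define p where "p z B = (if B \<in> OX then \<psi> (preimg Y f B) z else bot)" for z B
    have pP: "p z \<in> points X OX" if "z \<in> Z" for z
      unfolding points_def is_point_def
    proof (intro CollectI conjI ballI allI impI)
      fix A B assume "A \<in> OX" "B \<in> OX"
      then show "p z (inf A B) = inf (p z A) (p z B)"
        using top fc psi_inf by (simp add: p_def is_Ltop_def preimg_inf)
    next
      fix S assume S: "S \<subseteq> OX"
      then have "Sup S \<in> OX" using top by (simp add: is_Ltop_def)
      then have e1: "p z (Sup S) = \<psi> (Sup (preimg Y f ` S)) z" by (simp add: p_def preimg_Sup)
      have "preimg Y f ` S \<subseteq> OY" using S fc by blast
      then have e2: "\<psi> (Sup (preimg Y f ` S)) = Sup (\<psi> ` preimg Y f ` S)" by (rule psi_Sup)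
      have e3: "Sup (\<psi> ` preimg Y f ` S) z = Sup (p z ` S)"
        using S by (auto simp: image_image p_def intro!: arg_cong[where f=Sup] image_cong)
      show "p z (Sup S) = Sup (p z ` S)" using e1 e2 e3 by simp
    next
      fix a
      have "const_on X a \<in> OX" using top by (simp add: is_Ltop_def)
      moreover have "preimg Y f (const_on X a) = const_on Y a" using fX by (rule preimg_const)
      ultimately show "p z (const_on X a) = a"
        using psi_const that by (simp add: p_def const_on_def)
    next
      fix A assume "A \<notin> OX" then show "p z A = bot" by (simp add: p_def)
    qed
    define g where "g z = the_inv_into X (pt_of OX) (p z)" for z
    have gX: "z \<in> Z \<Longrightarrow> g z \<in> X" for z
      unfolding g_def using pP bij by (metis bij_betw_def the_inv_into_into order_refl)
    have ptg: "z \<in> Z \<Longrightarrow> pt_of OX (g z) = p z" for z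
      unfolding g_def using pP bij by (metis bij_betw_def f_the_inv_into_f)
    show "\<exists>g. Lcontinuous Z OZ X OX g \<and> (\<forall>y\<in>Y. g (j y) = f y)"
    proof (intro exI conjI ballI)
      show "Lcontinuous Z OZ X OX g"
        unfolding Lcontinuous_def
      proof (intro conjI ballI)
        show "g ` Z \<subseteq> X" using gX by auto
      next
        fix B assume B: "B \<in> OX"
        have "preimg Z g B = \<psi> (preimg Y f B)"
        proof
          fix z show "preimg Z g B z = \<psi> (preimg Y f B) z"
          proof (cases "z \<in> Z")
            case True
            then have "B (g z) = p z B" using ptg[OF True] B by (metis pt_of_def)
            then show ?thesis using True B by (simp add: preimg_def p_def)
          next
            case False
            then show ?thesis using Ltop_ext[OF topZ psiZ[OF fc[OF B]]] by (simp add: preimg_def)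
          qed
        qed
        then show "preimg Z g B \<in> OZ" using psiZ fc B by simp
      qed
    next
      fix y assume y: "y \<in> Y"
      have jy: "j y \<in> Z" using jZ y by auto
      have "p (j y) = pt_of OX (f y)"
      proof
        fix B show "p (j y) B = pt_of OX (f y) B"
        proof (cases "B \<in> OX")
          case True
          have "\<psi> (preimg Y f B) (j y) = \<phi> (\<psi> (preimg Y f B)) y" using y by (simp add: \<phi>_def preimg_def)
          also have "\<dots> = B (f y)" using phipsi fc True y by (simp add: preimg_def)
          finally show ?thesis using True by (simp add: p_def pt_of_def)
        qed (simp add: p_def pt_of_def)
      qed
      then show "g (j y) = f y" unfolding g_def using injX fX y by (simp add: the_inv_into_f_f image_subset_iff)
    qed
  qed
qed


lemma point_inf: "is_point OX X p \<Longrightarrow> A \<in> OX \<Longrightarrow> B \<in> OX \<Longrightarrow> p (inf A B) = inf (p A) (p B)"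
  unfolding is_point_def by simp

lemma point_Sup: "is_point OX X p \<Longrightarrow> S \<subseteq> OX \<Longrightarrow> p (Sup S) = Sup (p ` S)"
  unfolding is_point_def by simp

lemma point_const: "is_point OX X p \<Longrightarrow> p (const_on X a) = a"
  unfolding is_point_def by simp

lemma dir2:
  fixes X :: "'a set" and OX :: "('a \<Rightarrow> 'l::complete_lattice) set"
  assumes top: "is_Ltop X OX" and SI: "strictly_injective TYPE('a) TYPE(('a \<Rightarrow> 'l) \<Rightarrow> 'l) X OX"
  shows "L_sober X OX"
proof -
  have T0: "LT0 X OX" using SI by (simp add: strictly_injective_def)
  define Z where "Z = points X OX"
  define Phi where "Phi A = (\<lambda>p. if p \<in> Z then p A else bot)" for A :: "'a \<Rightarrow> 'l"
  define OZ where "OZ = Phi ` OX"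
  have extX: "\<And>A x. A \<in> OX \<Longrightarrow> x \<notin> X \<Longrightarrow> A x = bot" using top by (simp add: is_Ltop_def)
  have ptZ: "pt_of OX x \<in> Z" if x: "x \<in> X" for x
    unfolding Z_def points_def is_point_def
  proof (intro CollectI conjI ballI allI impI)
    fix A B assume "A \<in> OX" "B \<in> OX"
    then show "pt_of OX x (inf A B) = inf (pt_of OX x A) (pt_of OX x B)"
      using top by (simp add: pt_of_def is_Ltop_def)
  next
    fix S assume S: "S \<subseteq> OX"
    then have "Sup S \<in> OX" using top by (simp add: is_Ltop_def)
    then have "pt_of OX x (Sup S) = (SUP A\<in>S. A x)" by (simp add: pt_of_def)
    also have "\<dots> = Sup (pt_of OX x ` S)" using S by (auto simp: pt_of_def intro!: arg_cong[where f=Sup] image_cong)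
    finally show "pt_of OX x (Sup S) = Sup (pt_of OX x ` S)" .
  next
    fix a
    have "const_on X a \<in> OX" using top by (simp add: is_Ltop_def)
    then show "pt_of OX x (const_on X a) = a" using x by (simp add: pt_of_def const_on_def)
  next
    fix A assume "A \<notin> OX" then show "pt_of OX x A = bot" by (simp add: pt_of_def)
  qed
  have isp: "\<And>p. p \<in> Z \<Longrightarrow> is_point OX X p" by (simp add: Z_def points_def)
  have pext: "\<And>p A. p \<in> Z \<Longrightarrow> A \<notin> OX \<Longrightarrow> p A = bot" by (simp add: Z_def points_def)
  have topZ: "is_Ltop Z OZ"
    unfolding is_Ltop_def
  proof (intro conjI)
    show "\<forall>A\<in>OZ. \<forall>x. x \<notin> Z \<longrightarrow> A x = bot"
      unfolding OZ_def Phi_def by auto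
    show "\<forall>a. const_on Z a \<in> OZ"
    proof
      fix a
      have "const_on X a \<in> OX" using top by (simp add: is_Ltop_def)
      moreover have "Phi (const_on X a) = const_on Z a"
      proof (rule ext)
        fix p
        have "p (const_on X a) = a" if "p \<in> Z" using point_const[OF isp[OF that]] .
        then show "Phi (const_on X a) p = const_on Z a p" by (simp add: Phi_def const_on_def)
      qed
      ultimately show "const_on Z a \<in> OZ" unfolding OZ_def by (metis image_eqI)
    qed
    show "\<forall>A\<in>OZ. \<forall>B\<in>OZ. inf A B \<in> OZ"
    proof (intro ballI)
      fix A B assume "A \<in> OZ" "B \<in> OZ"
      then obtain A' B' where AB: "A' \<in> OX" "B' \<in> OX" "A = Phi A'" "B = Phi B'"
        unfolding OZ_def by (elim imageE) blast
      then have "inf A' B' \<in> OX" using top by (simp add: is_Ltop_def)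
      moreover have "Phi (inf A' B') = inf A B"
      proof (rule ext)
        fix p
        have "p (inf A' B') = inf (p A') (p B')" if "p \<in> Z" using point_inf[OF isp[OF that] AB(1,2)] .
        then show "Phi (inf A' B') p = inf A B p" using AB by (simp add: Phi_def)
      qed
      ultimately show "inf A B \<in> OZ" unfolding OZ_def by (metis image_eqI)
    qed
    show "\<forall>S. S \<subseteq> OZ \<longrightarrow> Sup S \<in> OZ"
    proof (intro allI impI)
      fix S assume S: "S \<subseteq> OZ"
      define S' where "S' = {A \<in> OX. Phi A \<in> S}"
      have SS': "S = Phi ` S'" using S unfolding S'_def OZ_def by blast
      have "S' \<subseteq> OX" by (auto simp: S'_def)
      then have "Sup S' \<in> OX" using top by (simp add: is_Ltop_def)
      moreover have "Phi (Sup S') = Sup S"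
      proof (rule ext)
        fix p show "Phi (Sup S') p = Sup S p"
        proof (cases "p \<in> Z")
          case True
          then have "p (Sup S') = Sup (p ` S')" using point_Sup[OF isp \<open>S' \<subseteq> OX\<close>] by simp
          then show ?thesis using True by (simp add: Phi_def SS' image_image)
        next
          case False then show ?thesis by (simp add: Phi_def SS' image_image)
        qed
      qed
      ultimately show "Sup S \<in> OZ" unfolding OZ_def by (metis image_eqI)
    qed
  qed
  have T0Z: "LT0 Z OZ"
    unfolding LT0_def
  proof (intro ballI impI)
    fix p q assume pq: "p \<in> Z" "q \<in> Z" "\<forall>A\<in>OZ. A p = A q"
    show "p = q"
    proof (rule ext)
      fix A show "p A = q A"
      proof (cases "A \<in> OX")
        case True
        then have "Phi A p = Phi A q" using pq by (auto simp: OZ_def)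
        then show ?thesis using pq by (simp add: Phi_def)
      next
        case False
        then show ?thesis using pext[OF pq(1) False] pext[OF pq(2) False] by simp
      qed
    qed
  qed
  have prePhi: "preimg X (pt_of OX) (Phi A) = A" if "A \<in> OX" for A
    using that ptZ extX by (auto simp: preimg_def Phi_def pt_of_def fun_eq_iff intro: sym)
  have injX: "inj_on (pt_of OX) X"
  proof
    fix x y assume "x \<in> X" "y \<in> X" "pt_of OX x = pt_of OX y"
    then have "\<forall>A\<in>OX. A x = A y" by (metis pt_of_def)
    then show "x = y" using T0 \<open>x \<in> X\<close> \<open>y \<in> X\<close> by (simp add: LT0_def)
  qed
  have emb: "strict_embedding X OX Z OZ (pt_of OX)"
    unfolding strict_embedding_def quasihomeomorphism_def subspace_embedding_def
  proof (intro conjI)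
    show "pt_of OX ` X \<subseteq> Z" using ptZ by auto
    show "pt_of OX ` X \<subseteq> Z" using ptZ by auto
    show "inj_on (pt_of OX) X" by (rule injX)
    show "OX = preimg X (pt_of OX) ` OZ" using prePhi by (force simp: OZ_def image_image)
    show "bij_betw (preimg X (pt_of OX)) OZ OX"
      unfolding bij_betw_def
    proof
      show "inj_on (preimg X (pt_of OX)) OZ"
        using prePhi by (auto simp: OZ_def inj_on_def)
      show "preimg X (pt_of OX) ` OZ = OX" using prePhi by (force simp: OZ_def image_image)
    qed
  qed
  have preid: "preimg X (\<lambda>x. x) B = B" if "B \<in> OX" for B
    using extX[OF that] by (auto simp: preimg_def fun_eq_iff)
  have cont: "Lcontinuous X OX X OX (\<lambda>x. x)"
    using preid by (auto simp: Lcontinuous_def)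
  have H: "\<forall>(Y::'a set) OY (Z::(('a \<Rightarrow> 'l) \<Rightarrow> 'l) set) OZ j f.
        is_Ltop Y OY \<and> LT0 Y OY \<and> is_Ltop Z OZ \<and> LT0 Z OZ \<and>
        strict_embedding Y OY Z OZ j \<and> Lcontinuous Y OY X OX f \<longrightarrow>
        (\<exists>g. Lcontinuous Z OZ X OX g \<and> (\<forall>y\<in>Y. g (j y) = f y))"
    using SI unfolding strictly_injective_def by (elim conjE)
  have "\<exists>g. Lcontinuous Z OZ X OX g \<and> (\<forall>y\<in>X. g (pt_of OX y) = y)"
    using H[rule_format, of X OX Z OZ "pt_of OX" "\<lambda>x. x"] top T0 topZ T0Z emb cont by simp
  then obtain g where g: "Lcontinuous Z OZ X OX g" and gj: "\<forall>y\<in>X. g (pt_of OX y) = y"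
    by blast
  have gX: "g ` Z \<subseteq> X" and gc: "\<And>B. B \<in> OX \<Longrightarrow> preimg Z g B \<in> OZ"
    using g by (auto simp: Lcontinuous_def)
  have surj: "pt_of OX (g p) = p" if p: "p \<in> Z" for p
  proof (rule ext)
    fix A show "pt_of OX (g p) A = p A"
    proof (cases "A \<in> OX")
      case True
      then obtain B where B: "B \<in> OX" "preimg Z g A = Phi B" using gc by (force simp: OZ_def)
      have "preimg X (pt_of OX) (preimg Z g A) = A"
        using gj ptZ extX True by (auto simp: preimg_def fun_eq_iff intro: sym)
      then have "A = B" using B prePhi by simp
      have "pt_of OX (g p) A = preimg Z g A p" using p True by (simp add: pt_of_def preimg_def)
      also have "\<dots> = p A" using B p \<open>A = B\<close> by (simp add: Phi_def)
      finally show ?thesis .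
    qed (use p pext in \<open>simp add: pt_of_def pext[OF p]\<close>)
  qed
  show ?thesis
    unfolding L_sober_def bij_betw_def
  proof
    show "inj_on (pt_of OX) X" by (rule injX)
    show "pt_of OX ` X = points X OX"
    proof
      show "pt_of OX ` X \<subseteq> points X OX" using ptZ by (auto simp: Z_def)
      show "points X OX \<subseteq> pt_of OX ` X"
      proof
        fix p assume "p \<in> points X OX"
        then have "p \<in> Z" by (simp add: Z_def)
        then have "g p \<in> X" "pt_of OX (g p) = p" using gX surj by auto
        then show "p \<in> pt_of OX ` X" by (metis image_eqI)
      qed
    qed
  qed
qed

theorem theorem3p12:
  fixes X :: "'a set" and OX :: "('a \<Rightarrow> 'l::complete_lattice) set"
  assumes "frame TYPE('l)" and "is_Ltop X OX"
  shows "(L_sober X OX \<longrightarrow> strictly_injective TYPE('b) TYPE('c) X OX) \<and>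
         (strictly_injective TYPE('a) TYPE(('a \<Rightarrow> 'l) \<Rightarrow> 'l) X OX \<longrightarrow> L_sober X OX)"
  using dir1[OF assms(2)] dir2[OF assms(2)] by blast

end
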